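(* If $G$ is a graph with no isolated vertices, then $\chi_{\mu_2}(G)\le \gamma_t(G)$.
   Context: A set $D\subseteq V(G)$ is a total dominating set if every vertex of $G$ has a neighbor in $D$; $\gamma_t(G)$ is the minimum cardinality of a total dominating set. A set $M\subseteq V(G)$ is a $2$-distance mutual-visibility set if for every two vertices $u,v\in M$ there exists a shortest $u,v$-path of length at most $2$ none of whose internal vertices lies in $M$. $\chi_{\mu_2}(G)$ is the minimum cardinality of a partition of $V(G)$ into $2$-distance mutual-visibility sets. *)

theory Defs
  imports Main "HOL-Library.Disjoint_Sets"
begin

definition simple_graph :: "'a set \<Rightarrow> ('a \<Rightarrow> 'a \<Rightarrow> bool) \<Rightarrow> bool" where
  "simple_graph V E \<longleftrightarrow> finite V \<and> (\<forall>u v. E u v \<longrightarrow> u \<in> V \<and> v \<in> V)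
     \<and> (\<forall>u v. E u v \<longrightarrow> E v u) \<and> (\<forall>v. \<not> E v v)"

definition no_isolated :: "'a set \<Rightarrow> ('a \<Rightarrow> 'a \<Rightarrow> bool) \<Rightarrow> bool" where
  "no_isolated V E \<longleftrightarrow> (\<forall>v\<in>V. \<exists>u\<in>V. E v u)"

definition total_dominating :: "'a set \<Rightarrow> ('a \<Rightarrow> 'a \<Rightarrow> bool) \<Rightarrow> 'a set \<Rightarrow> bool" where
  "total_dominating V E D \<longleftrightarrow> D \<subseteq> V \<and> (\<forall>v\<in>V. \<exists>u\<in>D. E v u)"

definition total_domination_number :: "'a set \<Rightarrow> ('a \<Rightarrow> 'a \<Rightarrow> bool) \<Rightarrow> nat" where
  "total_domination_number V E = (LEAST k. \<exists>D. total_dominating V E D \<and> card D = k)"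

text \<open>2-distance mutual-visibility: for distinct u, v in M there is a shortest
u,v-path of length at most 2 with no internal vertex in M.  Unfolded: either
u, v are adjacent (the edge is the shortest path, no internal vertices), or they
are non-adjacent (so a shortest path of length \<le> 2 has length exactly 2) and
have a common neighbour outside M.\<close>
definition dist2_mutual_visibility :: "'a set \<Rightarrow> ('a \<Rightarrow> 'a \<Rightarrow> bool) \<Rightarrow> 'a set \<Rightarrow> bool" where
  "dist2_mutual_visibility V E M \<longleftrightarrow> M \<subseteq> V \<and>
     (\<forall>u\<in>M. \<forall>v\<in>M. u \<noteq> v \<longrightarrow>
        E u v \<or> (\<exists>w\<in>V - M. E u w \<and> E w v))"

definition chi_mu2 :: "'a set \<Rightarrow> ('a \<Rightarrow> 'a \<Rightarrow> bool) \<Rightarrow> nat" where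
  "chi_mu2 V E = (LEAST k. \<exists>P. partition_on V P \<and>
      (\<forall>M\<in>P. dist2_mutual_visibility V E M) \<and> card P = k)"

end

theory Submission
  imports Defs
begin

theorem theorem3p2:
  fixes V :: "'a set" and E :: "'a \<Rightarrow> 'a \<Rightarrow> bool"
  assumes "simple_graph V E" and "no_isolated V E"
  shows "chi_mu2 V E \<le> total_domination_number V E"
proof -
  have fin: "finite V" and inV: "\<And>u v. E u v \<Longrightarrow> u \<in> V \<and> v \<in> V"
    and irr: "\<And>v. \<not> E v v" and sym: "\<And>u v. E u v \<Longrightarrow> E v u"
    using assms(1) unfolding simple_graph_def by blast+
  have "total_dominating V E V" using assms(2) unfolding total_dominating_def no_isolated_def by blast
  hence "\<exists>k D. total_dominating V E D \<and> card D = k" by blast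
  hence "\<exists>D. total_dominating V E D \<and> card D = total_domination_number V E"
    unfolding total_domination_number_def by (rule LeastI_ex)
  then obtain D where D: "total_dominating V E D" and cD: "card D = total_domination_number V E" by blast
  have DV: "D \<subseteq> V" and dom: "\<And>v. v \<in> V \<Longrightarrow> \<exists>u\<in>D. E v u" using D unfolding total_dominating_def by auto
  define f where "f v = (SOME u. u \<in> D \<and> E v u)" for v
  have f: "\<And>v. v \<in> V \<Longrightarrow> f v \<in> D \<and> E v (f v)"
    unfolding f_def by (rule someI_ex) (use dom in blast)
  define cls where "cls d = {v\<in>V. f v = d}" for d
  define P where "P = cls ` D - {{}}"
  have part: "partition_on V P"
  proof (rule partition_onI)
    show "\<Union>P = V"
    proof
      show "\<Union>P \<subseteq> V" unfolding P_def cls_def by blast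
      show "V \<subseteq> \<Union>P"
      proof
        fix v assume v: "v \<in> V"
        hence "v \<in> cls (f v)" "f v \<in> D" using f unfolding cls_def by auto
        thus "v \<in> \<Union>P" unfolding P_def by blast
      qed
    qed
    show "\<And>p q. p \<in> P \<Longrightarrow> q \<in> P \<Longrightarrow> p \<noteq> q \<Longrightarrow> disjnt p q"
    proof -
      fix p q assume "p \<in> P" "q \<in> P" "p \<noteq> q"
      then obtain a b where "p = cls a" "q = cls b" "a \<noteq> b" unfolding P_def by blast
      thus "disjnt p q" unfolding cls_def disjnt_def by blast
    qed
    show "{} \<notin> P" unfolding P_def by blast
  qed
  have vis: "\<forall>M\<in>P. dist2_mutual_visibility V E M"
  proof
    fix M assume "M \<in> P"
    then obtain d where d: "d \<in> D" and M: "M = cls d" unfolding P_def by blast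
    have "d \<notin> M"
    proof
      assume "d \<in> M"
      hence "d \<in> V" "f d = d" unfolding M cls_def by auto
      thus False using f[of d] irr[of d] by simp
    qed
    moreover have "d \<in> V" using d DV by blast
    ultimately show "dist2_mutual_visibility V E M"
      unfolding dist2_mutual_visibility_def
    proof (intro conjI ballI impI)
      show "M \<subseteq> V" unfolding M cls_def by blast
      fix u v assume "u \<in> M" "v \<in> M" "d \<notin> M" "d \<in> V"
      hence u: "u \<in> V" "f u = d" and v: "v \<in> V" "f v = d" unfolding M cls_def by auto
      have "E u d" using f[OF u(1)] u(2) by simp
      moreover have "E v d" using f[OF v(1)] v(2) by simp
      moreover have "d \<in> V - M" using \<open>d \<notin> M\<close> \<open>d \<in> V\<close> by blast
      ultimately have "E u d" "E v d" "d \<in> V - M" by auto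
      thus "E u v \<or> (\<exists>w\<in>V - M. E u w \<and> E w v)" using sym by blast
    qed
  qed
  have fD: "finite D" using DV fin finite_subset by blast
  have "card P \<le> card (cls ` D)" unfolding P_def using fD by (simp add: card_mono)
  also have "\<dots> \<le> card D" using fD by (rule card_image_le)
  finally have "card P \<le> card D" .
  have "chi_mu2 V E \<le> card P"
    unfolding chi_mu2_def by (rule Least_le) (use part vis in blast)
  thus ?thesis using \<open>card P \<le> card D\<close> cD by linarith
qed

end
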